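(* Let $M\ge2$, let $\bm{\mu}_1,\dots,\bm{\mu}_M\in\mathbb{R}^d$, and let $\epsilon>0$. Let $C_k(\mathbf{x})$ denote either the GLRT cost $\|g_\epsilon(\mathbf{x}-\bm{\mu}_k)\|_2^2$ for all $k$, or the minimum-distance cost $\|\mathbf{x}-\bm{\mu}_k\|_2^2$ for all $k$. Fix a true class $i$ and a noise realization $\mathbf{n}\in\mathbb{R}^d$. For $j\ne i$, let $\mathbf{e}_{ij}=-\epsilon\,\mathrm{sign}(\bm{\mu}_i-\bm{\mu}_j)$. Then the following are equivalent: (1) there exist $\mathbf{e}$ with $\|\mathbf{e}\|_\infty\le\epsilon$ and $j\ne i$ such that $C_j(\bm{\mu}_i+\mathbf{e}+\mathbf{n})<C_i(\bm{\mu}_i+\mathbf{e}+\mathbf{n})$; (2) there exists $j\ne i$ such that $C_j(\bm{\mu}_i+\mathbf{e}_{ij}+\mathbf{n})<C_i(\bm{\mu}_i+\mathbf{e}_{ij}+\mathbf{n})$.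
   Context: For $\epsilon>0$, $g_\epsilon(x)=\mathrm{sign}(x)\max(0,|x|-\epsilon)$ with $\mathrm{sign}(0)=0$, applied coordinate-wise; $\mathrm{sign}$ of a vector is also taken coordinate-wise. *)

theory Defs
  imports "HOL-Analysis.Analysis"
begin

definition soft_thresh :: "real \<Rightarrow> real ^ 'd \<Rightarrow> real ^ 'd" where
  "soft_thresh eps x = (\<chi> l. sgn (x $ l) * max 0 (\<bar>x $ l\<bar> - eps))"

definition vsgn :: "real ^ 'd \<Rightarrow> real ^ 'd" where
  "vsgn x = (\<chi> l. sgn (x $ l))"

definition glrt_cost :: "real \<Rightarrow> (nat \<Rightarrow> real ^ 'd) \<Rightarrow> nat \<Rightarrow> real ^ 'd \<Rightarrow> real" where
  "glrt_cost eps mu k x = (norm (soft_thresh eps (x - mu k)))\<^sup>2"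

definition md_cost :: "(nat \<Rightarrow> real ^ 'd) \<Rightarrow> nat \<Rightarrow> real ^ 'd \<Rightarrow> real" where
  "md_cost mu k x = (norm (x - mu k))\<^sup>2"

end

theory Submission imports Defs begin
definition p :: "real \<Rightarrow> real" where "p t = (max 0 t)^2"
lemma p_mono: "a \<le> b \<Longrightarrow> p a \<le> p b"
  unfolding p_def by (simp add: power_mono)
lemma p_md: assumes "u \<le> v" "0 \<le> d" shows "p (u+d) - p u \<le> p (v+d) - p v"
proof (cases "u + d \<le> 0")
  case True
  then have "p (u+d) = 0" "p u = 0" using assms by (auto simp: p_def max_def)
  then show ?thesis using p_mono[of v "v+d"] assms by simp
next
  case f1: False
  show ?thesis
  proof (cases "u \<le> 0")
    case True
    then have L: "p (u+d) - p u = (u+d)^2" using f1 by (simp add: p_def max_def)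
    show ?thesis
    proof (cases "v \<le> 0")
      case True
      then have "p (v+d) - p v = (v+d)^2" using f1 assms by (simp add: p_def max_def)
      moreover have "(u+d)^2 \<le> (v+d)^2" using f1 assms by (intro power_mono) auto
      ultimately show ?thesis using L by simp
    next
      case False
      then have "p (v+d) - p v = (v+d)^2 - v^2" using f1 assms by (simp add: p_def max_def)
      moreover have "(v+d)^2 - v^2 = d * (2 * v + d)" by (simp add: power2_eq_square algebra_simps)
      moreover have "d * (2 * v + d) \<ge> d*d" using False assms by (intro mult_left_mono) auto
      moreover have "(u+d)^2 \<le> d*d" using f1 True by (simp add: power2_eq_square mult_mono)
      ultimately show ?thesis using L by simp
    qed
  next
    case False
    then have "p (u+d) - p u = d * (2 * u + d)" using assms by (simp add: p_def max_def power2_eq_square algebra_simps)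
    moreover have "p (v+d) - p v = d * (2 * v + d)" using assms False by (simp add: p_def max_def power2_eq_square algebra_simps)
    moreover have "d * (2 * u + d) \<le> d * (2 * v + d)" using assms by (intro mult_left_mono) auto
    ultimately show ?thesis by simp
  qed
qed

definition MD :: "(real \<Rightarrow> real) \<Rightarrow> bool" where
  "MD h \<longleftrightarrow> (\<forall>u v d. u \<le> v \<longrightarrow> 0 \<le> d \<longrightarrow> h (u+d) - h u \<le> h (v+d) - h v)"

lemma MD_D: "MD h \<Longrightarrow> u \<le> v \<Longrightarrow> 0 \<le> d \<Longrightarrow> h (u+d) - h u \<le> h (v+d) - h v"
  unfolding MD_def by blast

definition hg :: "real \<Rightarrow> real \<Rightarrow> real" where "hg eps t = p (t - eps) + p (- t - eps)"

lemma MD_hg: "MD (hg eps)"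
  unfolding MD_def hg_def
proof (intro allI impI)
  fix u v d :: real assume a: "u \<le> v" "0 \<le> d"
  have e0: "u - eps + d = u + d - eps" "v - eps + d = v + d - eps" by simp_all
  have 1: "p (u + d - eps) - p (u - eps) \<le> p (v + d - eps) - p (v - eps)"
    using p_md[of "u - eps" "v - eps" d, unfolded e0] a by simp
  have e1: "- (v + d) - eps + d = - v - eps" "- (u + d) - eps + d = - u - eps" by simp_all
  have 2: "p (- v - eps) - p (- (v + d) - eps) \<le> p (- u - eps) - p (- (u + d) - eps)"
    using p_md[of "- (v + d) - eps" "- (u + d) - eps" d, unfolded e1] a by simp
  show "p (u + d - eps) + p (- (u + d) - eps) - (p (u - eps) + p (- u - eps))
    \<le> p (v + d - eps) + p (- (v + d) - eps) - (p (v - eps) + p (- v - eps))"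
    using 1 2 by linarith
qed

lemma MD_sq: "MD (\<lambda>t. t^2)"
  unfolding MD_def
proof (intro allI impI)
  fix u v d :: real assume a: "u \<le> v" "0 \<le> d"
  have "(u+d)^2 - u^2 = d * (2 * u + d)" "(v+d)^2 - v^2 = d * (2 * v + d)"
    by (simp_all add: power2_eq_square algebra_simps)
  moreover have "d * (2 * u + d) \<le> d * (2 * v + d)" using a by (intro mult_left_mono) auto
  ultimately show "(u+d)^2 - u^2 \<le> (v+d)^2 - v^2" by simp
qed

lemma st_sq: "eps > 0 \<Longrightarrow> (sgn t * max 0 (\<bar>t\<bar> - eps))^2 = hg eps t"
  unfolding hg_def p_def
  by (cases "t > 0"; cases "t = 0") (auto simp: max_def power2_eq_square sgn_if)

lemma coord:
  fixes h :: "real \<Rightarrow> real"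
  assumes "MD h" "\<bar>e\<bar> \<le> eps"
  shows "h (a + (- eps * sgn (a - b)) + n - b) - h (a + (- eps * sgn (a - b)) + n - a)
     \<le> h (a + e + n - b) - h (a + e + n - a)"
proof -
  consider "a > b" | "a = b" | "a < b" by linarith
  then show ?thesis
  proof cases
    case 1
    have "h ((- eps + n) + (a - b)) - h (- eps + n) \<le> h ((e + n) + (a - b)) - h (e + n)"
      using MD_D[OF assms(1), of "- eps + n" "e + n" "a - b"] assms(2) 1 by linarith
    then show ?thesis using 1 by (simp add: algebra_simps)
  next
    case 2 then show ?thesis by simp
  next
    case 3
    have "h ((e + n - (b - a)) + (b - a)) - h (e + n - (b - a)) \<le> h ((eps + n - (b - a)) + (b - a)) - h (eps + n - (b - a))"
      using MD_D[OF assms(1), of "e + n - (b - a)" "eps + n - (b - a)" "b - a"] assms(2) 3 by linarith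
    then show ?thesis using 3 by (simp add: algebra_simps)
  qed
qed

lemma cost_sum:
  fixes mu :: "nat \<Rightarrow> real ^ 'd"
  assumes "eps > 0" "C = glrt_cost eps mu \<or> C = md_cost mu"
  shows "\<exists>h. MD h \<and> (\<forall>k x. C k x = (\<Sum>l\<in>UNIV. h (x $ l - mu k $ l)))"
proof -
  have nsq: "(norm (y::real^'d))^2 = (\<Sum>l\<in>UNIV. (y $ l)^2)" for y
    unfolding power2_norm_eq_inner inner_vec_def by (simp add: power2_eq_square)
  from assms(2) show ?thesis
  proof
    assume C: "C = glrt_cost eps mu"
    show ?thesis
      by (rule exI[of _ "hg eps"]) (simp add: C MD_hg glrt_cost_def nsq soft_thresh_def st_sq assms(1))
  next
    assume C: "C = md_cost mu"
    show ?thesis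
      by (rule exI[of _ "\<lambda>t. t^2"]) (simp add: C MD_sq md_cost_def nsq)
  qed
qed

lemma infnorm_le: "(\<And>l. \<bar>(x::real^'d) $ l\<bar> \<le> c) \<Longrightarrow> infnorm x \<le> c"
  unfolding infnorm_cart by (rule cSup_least) auto

theorem mainTheorem9:
  fixes M :: nat and mu :: "nat \<Rightarrow> real ^ 'd" and eps :: real
    and C :: "nat \<Rightarrow> real ^ 'd \<Rightarrow> real" and i :: nat and n :: "real ^ 'd"
  assumes "M \<ge> 2" and "eps > 0"
    and "C = glrt_cost eps mu \<or> C = md_cost mu"
    and "i \<in> {1..M}"
  shows "(\<exists>e j. infnorm e \<le> eps \<and> j \<in> {1..M} \<and> j \<noteq> i \<and>
            C j (mu i + e + n) < C i (mu i + e + n))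
     \<longleftrightarrow>
         (\<exists>j \<in> {1..M}. j \<noteq> i \<and>
            C j (mu i + (- eps) *\<^sub>R vsgn (mu i - mu j) + n)
              < C i (mu i + (- eps) *\<^sub>R vsgn (mu i - mu j) + n))"
proof
  assume "\<exists>j \<in> {1..M}. j \<noteq> i \<and>
            C j (mu i + (- eps) *\<^sub>R vsgn (mu i - mu j) + n)
              < C i (mu i + (- eps) *\<^sub>R vsgn (mu i - mu j) + n)"
  then obtain j where j: "j \<in> {1..M}" "j \<noteq> i" "C j (mu i + (- eps) *\<^sub>R vsgn (mu i - mu j) + n)
              < C i (mu i + (- eps) *\<^sub>R vsgn (mu i - mu j) + n)" by blast
  have "infnorm ((- eps) *\<^sub>R vsgn (mu i - mu j)) \<le> eps"
    using assms(2) by (intro infnorm_le) (auto simp: vsgn_def sgn_if abs_mult)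
  then show "\<exists>e j. infnorm e \<le> eps \<and> j \<in> {1..M} \<and> j \<noteq> i \<and>
            C j (mu i + e + n) < C i (mu i + e + n)" using j by blast
next
  assume "\<exists>e j. infnorm e \<le> eps \<and> j \<in> {1..M} \<and> j \<noteq> i \<and>
            C j (mu i + e + n) < C i (mu i + e + n)"
  then obtain e j where ej: "infnorm e \<le> eps" "j \<in> {1..M}" "j \<noteq> i"
     "C j (mu i + e + n) < C i (mu i + e + n)" by blast
  obtain h where h: "MD h" "\<And>k x. C k x = (\<Sum>l\<in>UNIV. h (x $ l - mu k $ l))"
    using cost_sum[OF assms(2,3)] by blast
  define es where "es = (- eps) *\<^sub>R vsgn (mu i - mu j)"
  have D: "C j (mu i + f + n) - C i (mu i + f + n) =
     (\<Sum>l\<in>UNIV. h (mu i $ l + f $ l + n $ l - mu j $ l) - h (mu i $ l + f $ l + n $ l - mu i $ l))" for f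
    by (simp add: h sum_subtractf)
  have "(\<Sum>l\<in>UNIV. h (mu i $ l + es $ l + n $ l - mu j $ l) - h (mu i $ l + es $ l + n $ l - mu i $ l))
     \<le> (\<Sum>l\<in>UNIV. h (mu i $ l + e $ l + n $ l - mu j $ l) - h (mu i $ l + e $ l + n $ l - mu i $ l))"
  proof (rule sum_mono)
    fix l
    have "\<bar>e $ l\<bar> \<le> eps" using ej(1) component_le_infnorm_cart[of e l] by linarith
    from coord[OF h(1) this, of "mu i $ l" "mu j $ l" "n $ l"]
    show "h (mu i $ l + es $ l + n $ l - mu j $ l) - h (mu i $ l + es $ l + n $ l - mu i $ l)
       \<le> h (mu i $ l + e $ l + n $ l - mu j $ l) - h (mu i $ l + e $ l + n $ l - mu i $ l)"
      by (simp add: es_def vsgn_def)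
  qed
  then have "C j (mu i + es + n) < C i (mu i + es + n)"
    using D[of es] D[of e] ej(4) by linarith
  then show "\<exists>j \<in> {1..M}. j \<noteq> i \<and>
            C j (mu i + (- eps) *\<^sub>R vsgn (mu i - mu j) + n)
              < C i (mu i + (- eps) *\<^sub>R vsgn (mu i - mu j) + n)"
    using ej(2,3) unfolding es_def by blast
qed

end
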